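(* For any $(\hat\imath,\hat\jmath)\in\mathcal E$ with associated matrices $B_1,B_2$, $$\inf_{u^s\in\Delta_J}\Big(1+\big\langle e,B_1^{-1}B_2u^s\big\rangle\Big)>0.$$
   Context: Network: $\mathcal I=\{1,\dots,I\}$, $\mathcal J=\{1,\dots,J\}$, edges $\mathcal E\subset\mathcal I\times\mathcal J$ with the bipartite graph $\mathcal G=(\mathcal I\cup\mathcal J,\mathcal E)$ a tree; $\mathbb R^{\mathcal G}$ denotes arrays in $\mathbb R^{I\times J}$ vanishing off $\mathcal E$. Service rates $\mu_{ij}>0$ for $(i,j)\in\mathcal E$; $\mathcal J(i)=\{j:(i,j)\in\mathcal E\}$. Let $\mathcal D=\{(\alpha,\beta)\in\mathbb R^I\times\mathbb R^J:\sum_i\alpha_i=\sum_j\beta_j\}$ and $\Psi:\mathcal D\to\mathbb R^{\mathcal G}$ the unique linear map with $\sum_j\Psi_{ij}(\alpha,\beta)=\alpha_i$, $\sum_i\Psi_{ij}(\alpha,\beta)=\beta_j$. For $(\hat\imath,\hat\jmath)\in\mathcal E$, $B_1\in\mathbb R^{I\times I}$ and $B_2\in\mathbb R^{I\times J}$ are the unique matrices with column $\hat\jmath$ of $B_2$ zero and $\sum_{j\in\mathcal J(i)}\mu_{ij}\Psi_{ij}(\alpha,\beta)=(B_1\alpha+B_2\beta)_i$ for all $i$ and $(\alpha,\beta)\in\mathcal D$ ($B_1$ is invertible). $e$ is the all-ones vector and $\Delta_J=\{u\in\mathbb R^J_+:\langle e,u\rangle=1\}$. *)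

theory Defs
  imports "HOL-Analysis.Analysis"
begin

text \<open>Bipartite graph on vertex set 'i + 'j (Inl i for servers/classes i, Inr j for j),
  edge set E \<subseteq> 'i \<times> 'j.\<close>

definition bip_adj :: "('i \<times> 'j) set \<Rightarrow> ('i + 'j) \<Rightarrow> ('i + 'j) \<Rightarrow> bool" where
  "bip_adj E v w \<longleftrightarrow> (\<exists>i j. (i, j) \<in> E \<and> ((v = Inl i \<and> w = Inr j) \<or> (v = Inr j \<and> w = Inl i)))"

definition bip_connected :: "('i \<times> 'j) set \<Rightarrow> bool" where
  "bip_connected E \<longleftrightarrow> (\<forall>v w. (v, w) \<in> {(a, b). bip_adj E a b}\<^sup>*)"

definition bip_tree :: "('i \<times> 'j) set \<Rightarrow> bool" where
  "bip_tree E \<longleftrightarrow> bip_connected E \<and> (\<forall>e\<in>E. \<not> bip_connected (E - {e}))"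

definition in_RG :: "('i \<times> 'j) set \<Rightarrow> real^'j^'i \<Rightarrow> bool" where
  "in_RG E x \<longleftrightarrow> (\<forall>i j. (i, j) \<notin> E \<longrightarrow> x $ i $ j = 0)"

definition inD :: "real^'i::finite \<Rightarrow> real^'j::finite \<Rightarrow> bool" where
  "inD \<alpha> \<beta> \<longleftrightarrow> (\<Sum>i\<in>UNIV. \<alpha> $ i) = (\<Sum>j\<in>UNIV. \<beta> $ j)"

definition Psi :: "('i::finite \<times> 'j::finite) set \<Rightarrow> real^'i \<Rightarrow> real^'j \<Rightarrow> real^'j^'i" where
  "Psi E \<alpha> \<beta> = (THE x. in_RG E x \<and> (\<forall>i. (\<Sum>j\<in>UNIV. x $ i $ j) = \<alpha> $ i)
                                 \<and> (\<forall>j. (\<Sum>i\<in>UNIV. x $ i $ j) = \<beta> $ j))"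

definition simplexJ :: "(real^'j::finite) set" where
  "simplexJ = {u. (\<forall>j. 0 \<le> u $ j) \<and> (\<Sum>j\<in>UNIV. u $ j) = 1}"

end

theory Submission
  imports Defs
begin

lemma tree_cut:
  fixes E :: "('i::finite \<times> 'j::finite) set" and z :: "real^'j^'i"
  assumes tree: "bip_tree E" and z: "in_RG E z"
    and rows: "\<And>i. (\<Sum>j\<in>UNIV. z$i$j) = 0" and cols: "\<And>j. (\<Sum>i\<in>UNIV. z$i$j) = 0"
    and ab: "(a,b) \<in> E"
  shows "z$a$b = 0"
proof -
  define R' where "R' = {(v,w). bip_adj (E - {(a,b)}) v w}"
  define C where "C = {v. (Inl a, v) \<in> R'\<^sup>*}"
  have symR': "(v,w) \<in> R' \<Longrightarrow> (w,v) \<in> R'" for v w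
    unfolding R'_def bip_adj_def by blast
  have symC: "(v,w) \<in> R'\<^sup>* \<Longrightarrow> (w,v) \<in> R'\<^sup>*" for v w
  proof (induction rule: rtrancl_induct)
    case base thus ?case by simp
  next
    case (step y z) thus ?case using symR' by (meson converse_rtrancl_into_rtrancl)
  qed
  have bC: "Inr b \<notin> C"
  proof
    assume "Inr b \<in> C"
    hence ab': "(Inl a, Inr b) \<in> R'\<^sup>*" by (simp add: C_def)
    have sub: "(v,w) \<in> R'\<^sup>*" if "bip_adj E v w" for v w
    proof -
      from that obtain i j where ij: "(i,j) \<in> E" "(v = Inl i \<and> w = Inr j) \<or> (v = Inr j \<and> w = Inl i)"
        unfolding bip_adj_def by blast
      show ?thesis
      proof (cases "(i,j) = (a,b)")
        case True thus ?thesis using ij(2) ab' symC by auto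
      next
        case False
        hence "(v,w) \<in> R'" using ij unfolding R'_def bip_adj_def by blast
        thus ?thesis by blast
      qed
    qed
    have "(v,w) \<in> R'\<^sup>*" if "(v,w) \<in> {(a, b). bip_adj E a b}\<^sup>*" for v w
      using that
    proof (induction rule: rtrancl_induct)
      case base thus ?case by simp
    next
      case (step y z)
      hence "bip_adj E y z" by simp
      hence "(y,z) \<in> R'\<^sup>*" by (rule sub)
      thus ?case using step.IH by (rule rtrancl_trans[rotated])
    qed
    hence "bip_connected (E - {(a,b)})"
      using tree unfolding bip_tree_def bip_connected_def R'_def by blast
    thus False using tree ab unfolding bip_tree_def by blast
  qed
  have closed: "(Inl i \<in> C) = (Inr j \<in> C)" if "(i,j) \<in> E" "(i,j) \<noteq> (a,b)" for i j
  proof -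
    have r1: "(Inl i, Inr j) \<in> R'" and r2: "(Inr j, Inl i) \<in> R'"
      using that unfolding R'_def bip_adj_def by blast+
    show ?thesis
    proof
      assume "Inl i \<in> C" thus "Inr j \<in> C" unfolding C_def using r1 by (simp add: rtrancl_into_rtrancl)
    next
      assume "Inr j \<in> C" thus "Inl i \<in> C" unfolding C_def using r2 by (simp add: rtrancl_into_rtrancl)
    qed
  qed
  have aC: "Inl a \<in> C" by (simp add: C_def)
  have S1: "(\<Sum>i\<in>UNIV. \<Sum>j\<in>UNIV. z$i$j * (if Inl i \<in> C then 1 else 0)) = 0"
  proof -
    have "(\<Sum>i\<in>UNIV. \<Sum>j\<in>UNIV. z$i$j * (if Inl i \<in> C then 1 else 0))
        = (\<Sum>i\<in>UNIV. (\<Sum>j\<in>UNIV. z$i$j) * (if Inl i \<in> C then 1 else 0))"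
      by (simp add: sum_distrib_right)
    also have "\<dots> = 0" by (simp add: rows)
    finally show ?thesis .
  qed
  have S2: "(\<Sum>i\<in>UNIV. \<Sum>j\<in>UNIV. z$i$j * (if Inr j \<in> C then 1 else 0)) = 0"
  proof -
    have "(\<Sum>i\<in>UNIV. \<Sum>j\<in>UNIV. z$i$j * (if Inr j \<in> C then 1 else 0))
        = (\<Sum>j\<in>UNIV. \<Sum>i\<in>UNIV. z$i$j * (if Inr j \<in> C then 1 else 0))"
      by (rule sum.swap)
    also have "\<dots> = (\<Sum>j\<in>UNIV. (\<Sum>i\<in>UNIV. z$i$j) * (if Inr j \<in> C then 1 else 0))"
      by (simp add: sum_distrib_right)
    also have "\<dots> = 0" by (simp add: cols)
    finally show ?thesis .
  qed
  have "(\<Sum>i\<in>UNIV. \<Sum>j\<in>UNIV. z$i$j * ((if Inl i \<in> C then 1 else 0) - (if Inr j \<in> C then 1 else 0))) = 0"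
    using S1 S2 by (simp add: right_diff_distrib sum_subtractf)
  moreover have "(\<Sum>i\<in>UNIV. \<Sum>j\<in>UNIV. z$i$j * ((if Inl i \<in> C then 1 else 0) - (if Inr j \<in> C then 1 else 0)))
     = (\<Sum>i\<in>UNIV. \<Sum>j\<in>UNIV. (if i = a then (if j = b then z$a$b else 0) else 0))"
  proof (intro sum.cong refl)
    fix i j
    show "z$i$j * ((if Inl i \<in> C then 1 else 0) - (if Inr j \<in> C then 1 else 0)) = (if i = a then (if j = b then z$a$b else 0) else 0)"
    proof (cases "(i,j) = (a,b)")
      case True thus ?thesis using aC bC by auto
    next
      case False
      show ?thesis
      proof (cases "(i,j) \<in> E")
        case True thus ?thesis using closed[OF True False] False by auto
      next
        case F2: False
        thus ?thesis using z False unfolding in_RG_def by auto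
      qed
    qed
  qed
  moreover have "(\<Sum>i\<in>UNIV. \<Sum>j\<in>UNIV. (if i = a then (if j = b then z$a$b else 0) else 0)) = z$a$b"
  proof -
    have "(\<Sum>j\<in>UNIV. if i = a then if j = b then z$a$b else 0 else 0) = (if i = a then z$a$b else 0)" for i
      by (cases "i = a") auto
    thus ?thesis by simp
  qed
  ultimately show ?thesis by simp
qed

definition RS :: "real^'j::finite^'i::finite \<Rightarrow> real^'i" where
  "RS x = (\<chi> i. \<Sum>j\<in>UNIV. x$i$j)"
definition CS :: "real^'j::finite^'i::finite \<Rightarrow> real^'j" where
  "CS x = (\<chi> j. \<Sum>i\<in>UNIV. x$i$j)"
definition svu :: "('i \<Rightarrow> 'j \<Rightarrow> real) \<Rightarrow> real^'j::finite^'i::finite \<Rightarrow> 'i \<Rightarrow> real" where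
  "svu \<mu> x i = (\<Sum>j\<in>UNIV. \<mu> i j * x$i$j)"
definition colv :: "real^'j::finite^'i::finite \<Rightarrow> 'j \<Rightarrow> real" where
  "colv x k = (\<Sum>i\<in>UNIV. x$i$k)"
definition dl :: "'i::finite \<Rightarrow> 'j::finite \<Rightarrow> real^'j^'i" where
  "dl i j = (\<chi> a b. if a = i \<and> b = j then 1 else 0)"

lemma psi_eq:
  fixes E :: "('i::finite \<times> 'j::finite) set" and x :: "real^'j^'i"
  assumes tree: "bip_tree E" and x: "in_RG E x"
  shows "Psi E (RS x) (CS x) = x"
  unfolding Psi_def
proof (rule the_equality)
  show "in_RG E x \<and> (\<forall>i. (\<Sum>j\<in>UNIV. x $ i $ j) = RS x $ i) \<and> (\<forall>j. (\<Sum>i\<in>UNIV. x $ i $ j) = CS x $ j)"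
    using x by (simp add: RS_def CS_def)
next
  fix y :: "real^'j^'i"
  assume y: "in_RG E y \<and> (\<forall>i. (\<Sum>j\<in>UNIV. y $ i $ j) = RS x $ i) \<and> (\<forall>j. (\<Sum>i\<in>UNIV. y $ i $ j) = CS x $ j)"
  define z where "z = y - x"
  have zE: "in_RG E z" using x y unfolding z_def in_RG_def by simp
  have zr: "(\<Sum>j\<in>UNIV. z$i$j) = 0" for i using y unfolding z_def by (simp add: sum_subtractf RS_def)
  have zc: "(\<Sum>i\<in>UNIV. z$i$j) = 0" for j using y unfolding z_def by (simp add: sum_subtractf CS_def)
  have "z$a$b = 0" for a b
  proof (cases "(a,b) \<in> E")
    case True thus ?thesis using tree_cut[OF tree zE zr zc] by blast
  next
    case False thus ?thesis using zE unfolding in_RG_def by blast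
  qed
  hence "z = 0" by (simp add: vec_eq_iff)
  thus "y = x" unfolding z_def by simp
qed

lemma inD_RS_CS: "inD (RS x) (CS x)"
  unfolding inD_def RS_def CS_def vec_lambda_beta by (rule sum.swap)

lemma flows:
  fixes E :: "('i::finite \<times> 'j::finite) set" and \<mu> :: "'i \<Rightarrow> 'j \<Rightarrow> real" and jhat :: 'j
  assumes conn: "bip_connected E"
    and mu_pos: "\<And>i j. (i, j) \<in> E \<Longrightarrow> \<mu> i j > 0"
  shows "(\<forall>j. j \<noteq> jhat \<longrightarrow> (\<exists>x. in_RG E x \<and> (\<forall>i. svu \<mu> x i = 0)
              \<and> (\<forall>k. k \<noteq> jhat \<longrightarrow> colv x k = (if k = j then 1 else 0)) \<and> colv x jhat < 0))
       \<and> (\<forall>i. \<exists>x. in_RG E x \<and> (\<forall>i'. svu \<mu> x i' = (if i' = i then 1 else 0))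
              \<and> (\<forall>k. k \<noteq> jhat \<longrightarrow> colv x k = 0) \<and> colv x jhat > 0)"
proof -
  define P where "P v = (case v of
      Inr j \<Rightarrow> j = jhat \<or> (\<exists>x. in_RG E x \<and> (\<forall>i. svu \<mu> x i = 0)
              \<and> (\<forall>k. k \<noteq> jhat \<longrightarrow> colv x k = (if k = j then 1 else 0)) \<and> colv x jhat < 0)
    | Inl i \<Rightarrow> (\<exists>x. in_RG E x \<and> (\<forall>i'. svu \<mu> x i' = (if i' = i then 1 else 0))
              \<and> (\<forall>k. k \<noteq> jhat \<longrightarrow> colv x k = 0) \<and> colv x jhat > 0))" for v
  have dlE: "in_RG E (dl i j)" if "(i,j) \<in> E" for i j
    using that unfolding in_RG_def dl_def by auto
  have dlsv: "svu \<mu> (dl i j) i' = (if i' = i then \<mu> i j else 0)" for i j i'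
  proof -
    have "(\<Sum>ja\<in>UNIV. \<mu> i ja * (if ja = j then 1 else 0)) = (\<Sum>ja\<in>UNIV. if ja = j then \<mu> i ja else 0)"
      by (rule sum.cong) auto
    thus ?thesis unfolding svu_def dl_def by (cases "i' = i") auto
  qed
  have dlcol: "colv (dl i j) k = (if k = j then 1 else 0)" for i j k
    unfolding colv_def dl_def by (cases "k = j") auto
  have svlin: "svu \<mu> (c *\<^sub>R x - d *\<^sub>R y) i = c * svu \<mu> x i - d * svu \<mu> y i" for c d x y i
    unfolding svu_def by (simp add: sum_subtractf sum_distrib_left algebra_simps)
  have collin: "colv (c *\<^sub>R x - d *\<^sub>R y) k = c * colv x k - d * colv y k" for c d x y k
    unfolding colv_def by (simp add: sum_subtractf sum_distrib_left algebra_simps)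
  have RGlin: "in_RG E (c *\<^sub>R x - d *\<^sub>R y)" if "in_RG E x" "in_RG E y" for c d x y
    using that unfolding in_RG_def by simp
  have RG0: "in_RG E (0::real^'j^'i)" unfolding in_RG_def by simp
  have stepP: "P v" if R: "(v, w) \<in> {(a, b). bip_adj E a b}" and Pw: "P w" for v w
  proof -
    from R obtain i j where ij: "(i,j) \<in> E" "(v = Inl i \<and> w = Inr j) \<or> (v = Inr j \<and> w = Inl i)"
      unfolding bip_adj_def by blast
    have mu: "\<mu> i j > 0" using mu_pos ij(1) by blast
    show ?thesis
    proof (cases "v = Inl i \<and> w = Inr j")
      case True
      hence vw: "v = Inl i" "w = Inr j" by auto
      obtain x' where x': "in_RG E x'" "\<forall>i. svu \<mu> x' i = 0"
          "\<forall>k. k \<noteq> jhat \<longrightarrow> colv x' k = (if k = j then 1 else 0)"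
          "j \<noteq> jhat \<longrightarrow> colv x' jhat < 0"
          "j = jhat \<longrightarrow> colv x' jhat = 0"
      proof (cases "j = jhat")
        case True
        show ?thesis by (rule that[of 0]) (auto simp: RG0 svu_def colv_def True)
      next
        case False
        with Pw vw obtain x' where "in_RG E x'" "\<forall>i. svu \<mu> x' i = 0"
          "\<forall>k. k \<noteq> jhat \<longrightarrow> colv x' k = (if k = j then 1 else 0)" "colv x' jhat < 0"
          unfolding P_def by auto
        thus ?thesis using that False by blast
      qed
      define y where "y = (1 / \<mu> i j) *\<^sub>R dl i j - (1 / \<mu> i j) *\<^sub>R x'"
      have "in_RG E y" unfolding y_def by (rule RGlin[OF dlE[OF ij(1)] x'(1)])
      moreover have "\<forall>i'. svu \<mu> y i' = (if i' = i then 1 else 0)"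
        unfolding y_def svlin dlsv using x'(2) mu by auto
      moreover have "\<forall>k. k \<noteq> jhat \<longrightarrow> colv y k = 0"
        unfolding y_def collin dlcol using x'(3) by auto
      moreover have "colv y jhat > 0"
      proof (cases "j = jhat")
        case True thus ?thesis unfolding y_def collin dlcol using x'(5) mu by simp
      next
        case False thus ?thesis unfolding y_def collin dlcol using x'(4) mu
          by (simp add: divide_neg_pos)
      qed
      ultimately show ?thesis unfolding P_def vw by auto
    next
      case False
      hence vw: "v = Inr j" "w = Inl i" using ij(2) by auto
      show ?thesis
      proof (cases "j = jhat")
        case True thus ?thesis unfolding P_def vw by simp
      next
        case False
        from Pw vw obtain x' where x': "in_RG E x'" "\<forall>i'. svu \<mu> x' i' = (if i' = i then 1 else 0)"
              "\<forall>k. k \<noteq> jhat \<longrightarrow> colv x' k = 0" "colv x' jhat > 0"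
          unfolding P_def by auto
        define y where "y = 1 *\<^sub>R dl i j - \<mu> i j *\<^sub>R x'"
        have "in_RG E y" unfolding y_def by (rule RGlin[OF dlE[OF ij(1)] x'(1)])
        moreover have "\<forall>i'. svu \<mu> y i' = 0"
          unfolding y_def svlin dlsv using x'(2) by auto
        moreover have "\<forall>k. k \<noteq> jhat \<longrightarrow> colv y k = (if k = j then 1 else 0)"
          unfolding y_def collin dlcol using x'(3) by auto
        moreover have "colv y jhat < 0"
          unfolding y_def collin dlcol using x'(4) mu False
          by (simp add: mult_pos_pos)
        ultimately show ?thesis unfolding P_def vw using False by auto
      qed
    qed
  qed
  have all: "P v" for v
  proof -
    have "(v, Inr jhat) \<in> {(a, b). bip_adj E a b}\<^sup>*" using conn unfolding bip_connected_def by blast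
    thus ?thesis
    proof (induction rule: converse_rtrancl_induct)
      case base thus ?case unfolding P_def by simp
    next
      case (step y z) thus ?case using stepP by blast
    qed
  qed
  show ?thesis
  proof (intro conjI allI impI)
    fix j assume "j \<noteq> jhat"
    thus "\<exists>x. in_RG E x \<and> (\<forall>i. svu \<mu> x i = 0)
              \<and> (\<forall>k. k \<noteq> jhat \<longrightarrow> colv x k = (if k = j then 1 else 0)) \<and> colv x jhat < 0"
      using all[of "Inr j"] unfolding P_def by simp
  next
    fix i show "\<exists>x. in_RG E x \<and> (\<forall>i'. svu \<mu> x i' = (if i' = i then 1 else 0))
              \<and> (\<forall>k. k \<noteq> jhat \<longrightarrow> colv x k = 0) \<and> colv x jhat > 0"
      using all[of "Inl i"] unfolding P_def by simp
  qed
qed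

lemma B2_eq:
  fixes B2 :: "real^'j::finite^'i::finite"
  assumes "\<And>i. B2 $ i $ jhat = 0" and "\<And>k. k \<noteq> jhat \<Longrightarrow> v $ k = w $ k"
  shows "B2 *v v = B2 *v w"
  unfolding vec_eq_iff matrix_vector_mult_def
proof (intro allI)
  fix i
  show "(\<chi> i. \<Sum>j\<in>UNIV. B2 $ i $ j * v $ j) $ i = (\<chi> i. \<Sum>j\<in>UNIV. B2 $ i $ j * w $ j) $ i"
  proof -
    have eq: "B2$i$j * v$j = B2$i$j * w$j" for j using assms by (cases "j = jhat") auto
    show ?thesis unfolding vec_lambda_beta by (rule sum.cong[OF refl eq])
  qed
qed

theorem lemma2:
  fixes E :: "('i::finite \<times> 'j::finite) set"
    and \<mu> :: "'i \<Rightarrow> 'j \<Rightarrow> real"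
    and ihat :: 'i and jhat :: 'j
    and B1 :: "real^'i^'i" and B2 :: "real^'j^'i"
  assumes tree: "bip_tree E"
    and mu_pos: "\<And>i j. (i, j) \<in> E \<Longrightarrow> \<mu> i j > 0"
    and edge: "(ihat, jhat) \<in> E"
    and B2_col: "\<And>i. B2 $ i $ jhat = 0"
    and B_def: "\<And>\<alpha> \<beta> i. inD \<alpha> \<beta> \<Longrightarrow>
        (\<Sum>j\<in>{j. (i, j) \<in> E}. \<mu> i j * Psi E \<alpha> \<beta> $ i $ j) = (B1 *v \<alpha> + B2 *v \<beta>) $ i"
  shows "(INF u\<in>simplexJ. 1 + (\<Sum>i\<in>UNIV. (matrix_inv B1 *v (B2 *v u)) $ i)) > 0"
proof -
  have conn: "bip_connected E" using tree unfolding bip_tree_def by blast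
  note F = flows[where \<mu>=\<mu> and jhat=jhat, OF conn mu_pos]
  have K: "(\<chi> i. svu \<mu> x i) = B1 *v RS x + B2 *v CS x" if x: "in_RG E x" for x
  proof -
    have "svu \<mu> x i = (B1 *v RS x + B2 *v CS x) $ i" for i
    proof -
      have "svu \<mu> x i = (\<Sum>j\<in>{j. (i, j) \<in> E}. \<mu> i j * x $ i $ j)"
        unfolding svu_def
        by (rule sum.mono_neutral_right) (use x in \<open>auto simp: in_RG_def\<close>)
      also have "\<dots> = (\<Sum>j\<in>{j. (i, j) \<in> E}. \<mu> i j * Psi E (RS x) (CS x) $ i $ j)"
        using psi_eq[OF tree x] by simp
      also have "\<dots> = (B1 *v RS x + B2 *v CS x) $ i" by (rule B_def[OF inD_RS_CS])
      finally show ?thesis .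
    qed
    thus ?thesis by (simp add: vec_eq_iff)
  qed
  from F have "\<forall>i. \<exists>x. in_RG E x \<and> (\<forall>i'. svu \<mu> x i' = (if i' = i then 1 else 0))
              \<and> (\<forall>k. k \<noteq> jhat \<longrightarrow> colv x k = 0) \<and> colv x jhat > 0" by blast
  then obtain X where X: "\<And>i. in_RG E (X i)" "\<And>i i'. svu \<mu> (X i) i' = (if i' = i then 1 else 0)"
      "\<And>i k. k \<noteq> jhat \<Longrightarrow> colv (X i) k = 0" by metis
  define M :: "real^'i^'i" where "M = (\<chi> a b. RS (X b) $ a)"
  have BX: "B1 *v RS (X b) = (\<chi> i. if i = b then 1 else 0)" for b
  proof -
    have "B2 *v CS (X b) = B2 *v 0"
      by (rule B2_eq[OF B2_col]) (simp add: CS_def X(3)[unfolded colv_def])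
    hence "(\<chi> i. svu \<mu> (X b) i) = B1 *v RS (X b)" using K[OF X(1)] by simp
    thus ?thesis using X(2) by (simp add: vec_eq_iff)
  qed
  have BM: "B1 ** M = mat 1"
  proof -
    have "(B1 ** M) $ a $ b = mat 1 $ a $ b" for a b
    proof -
      have "(B1 ** M) $ a $ b = (B1 *v RS (X b)) $ a"
        by (simp add: matrix_matrix_mult_def matrix_vector_mult_def M_def)
      thus ?thesis using BX by (simp add: mat_def)
    qed
    thus ?thesis by (simp add: vec_eq_iff)
  qed
  hence MB: "M ** B1 = mat 1" by (simp add: matrix_left_right_inverse)
  define L where "L = matrix_inv B1"
  have LB: "L ** B1 = mat 1"
  proof -
    have "\<exists>A'. B1 ** A' = mat 1 \<and> A' ** B1 = mat 1" using BM MB by blast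
    hence "B1 ** L = mat 1 \<and> L ** B1 = mat 1"
      unfolding L_def matrix_inv_def by (rule someI_ex)
    thus ?thesis by blast
  qed
  define N where "N = L ** B2"
  define c where "c j = 1 + (\<Sum>i\<in>UNIV. N $ i $ j)" for j
  have Ncol: "N *v axis j 1 = (\<chi> i. N $ i $ j)" for j
    by (simp add: matrix_vector_mult_basis column_def)
  have cpos: "c j > 0" for j
  proof (cases "j = jhat")
    case True
    have "B2 *v axis j 1 = B2 *v 0"
      by (rule B2_eq[OF B2_col]) (simp add: axis_def True)
    hence "N *v axis j 1 = 0" unfolding N_def by (simp add: matrix_vector_mul_assoc[symmetric])
    hence "\<forall>i. N $ i $ j = 0" using Ncol[of j] by (simp add: vec_eq_iff)
    thus ?thesis unfolding c_def by simp
  next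
    case False
    from F False obtain x where x: "in_RG E x" "\<forall>i. svu \<mu> x i = 0"
        "\<forall>k. k \<noteq> jhat \<longrightarrow> colv x k = (if k = j then 1 else 0)" "colv x jhat < 0"
      by blast
    have "B2 *v CS x = B2 *v axis j 1"
      by (rule B2_eq[OF B2_col]) (use x(3) in \<open>simp add: axis_def CS_def colv_def\<close>)
    hence "0 = B1 *v RS x + B2 *v axis j 1" using K[OF x(1)] x(2) by (simp add: vec_eq_iff)
    hence "L *v (B1 *v RS x + B2 *v axis j 1) = L *v 0" by simp
    hence "L *v 0 = L *v (B1 *v RS x) + L *v (B2 *v axis j 1)"
      by (simp only: matrix_vector_right_distrib)
    hence "0 = RS x + N *v axis j 1" unfolding N_def
      by (simp add: matrix_vector_mul_assoc LB)
    hence Nj: "N *v axis j 1 = - RS x" by (simp add: eq_neg_iff_add_eq_0 add.commute)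
    have "(\<Sum>i\<in>UNIV. N $ i $ j) = (\<Sum>i\<in>UNIV. (N *v axis j 1) $ i)" using Ncol[of j] by simp
    also have "\<dots> = - (\<Sum>i\<in>UNIV. RS x $ i)" using Nj by (simp add: sum_negf)
    also have "(\<Sum>i\<in>UNIV. RS x $ i) = (\<Sum>k\<in>UNIV. colv x k)"
      unfolding RS_def colv_def vec_lambda_beta by (rule sum.swap)
    also have "\<dots> = (\<Sum>k\<in>UNIV. (if k = jhat then colv x jhat else 0) + (if k = j then 1 else 0))"
    proof (rule sum.cong[OF refl])
      fix k show "colv x k = (if k = jhat then colv x jhat else 0) + (if k = j then 1 else 0)"
        using x(3) False by (cases "k = jhat") auto
    qed
    also have "\<dots> = colv x jhat + 1" by (simp add: sum.distrib)
    finally have "(\<Sum>i\<in>UNIV. N $ i $ j) = - (colv x jhat + 1)" .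
    thus ?thesis unfolding c_def using x(4) by simp
  qed
  define m where "m = Min (range c)"
  have mpos: "m > 0" unfolding m_def using cpos by (simp)
  have mle: "m \<le> c j" for j unfolding m_def by simp
  have "m \<le> (INF u\<in>simplexJ. 1 + (\<Sum>i\<in>UNIV. (matrix_inv B1 *v (B2 *v u)) $ i))"
  proof (rule cINF_greatest)
    have "axis jhat 1 \<in> (simplexJ :: (real^'j) set)"
      unfolding simplexJ_def by (simp add: axis_def)
    thus "(simplexJ :: (real^'j) set) \<noteq> {}" by blast
  next
    fix u :: "real^'j" assume "u \<in> simplexJ"
    hence u0: "\<And>j. 0 \<le> u $ j" and u1: "(\<Sum>j\<in>UNIV. u $ j) = 1" unfolding simplexJ_def by auto
    have "(\<Sum>i\<in>UNIV. (matrix_inv B1 *v (B2 *v u)) $ i) = (\<Sum>i\<in>UNIV. (N *v u) $ i)"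
      unfolding N_def L_def by (simp add: matrix_vector_mul_assoc)
    also have "\<dots> = (\<Sum>i\<in>UNIV. \<Sum>j\<in>UNIV. N $ i $ j * u $ j)"
      by (simp add: matrix_vector_mult_def)
    also have "\<dots> = (\<Sum>j\<in>UNIV. \<Sum>i\<in>UNIV. N $ i $ j * u $ j)" by (rule sum.swap)
    also have "\<dots> = (\<Sum>j\<in>UNIV. u $ j * (\<Sum>i\<in>UNIV. N $ i $ j))"
      by (simp add: sum_distrib_left mult.commute)
    finally have "1 + (\<Sum>i\<in>UNIV. (matrix_inv B1 *v (B2 *v u)) $ i) = (\<Sum>j\<in>UNIV. u $ j * c j)"
      unfolding c_def using u1 by (simp add: distrib_left sum.distrib)
    moreover have "(\<Sum>j\<in>UNIV. u $ j * m) \<le> (\<Sum>j\<in>UNIV. u $ j * c j)"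
      by (rule sum_mono) (simp add: mle u0 mult_left_mono)
    moreover have "(\<Sum>j\<in>UNIV. u $ j * m) = m" using u1 by (simp add: sum_distrib_right[symmetric])
    ultimately show "m \<le> 1 + (\<Sum>i\<in>UNIV. (matrix_inv B1 *v (B2 *v u)) $ i)" by simp
  qed
  thus ?thesis using mpos by linarith
qed

end
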